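(* Assume $2\mu\bar c>\sigma^2 r$. There is a constant $K>0$, independent of $n$ and $i$, such that for every $n\in\mathbb N$ the solution $v_0,\dots,v_n$ of the regime-switching system satisfies $0\le v_i'\le K$ on $[0,\infty)$ for $i=0,\dots,n$.
   Context: Constants: $\mu\in\mathbb R$, $\sigma>0$, $r>0$, $\bar c\in(0,\mu]$, $b\in[0,1]$. Operators: $\mathcal L w=\tfrac12\sigma^2w''+\mu w'-rw$, $\mathcal T w=b(1-w')+(1-b)(1-w')^+$. Regime-switching system: for $n\in\mathbb N$ let $\Delta c=\bar c/n$, $c_i=\bar c-i\Delta c$ ($i=0,\dots,n$), $v_{-1}\equiv0$; find bounded functions $v_0,\dots,v_n$ on $[0,\infty)$, $v_i\in W^2_{p,\mathrm{loc}}([0,\infty))$ for all $p>1$, with $\min\{-\mathcal Lv_i-c_i\,\mathcal Tv_i,\ v_i-v_{i-1}\}=0$ a.e. on $(0,\infty)$ and $v_i(0)=0$, for $i=0,\dots,n$ (such a solution exists and is unique). *)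

theory Defs
  imports "HOL-Analysis.Analysis"
begin

text \<open>Sobolev regularity W^2_{p,loc}([0,\<infinity>)) for all p > 1, in one dimension:
  v is differentiable on [0,\<infinity>) (one-sided at 0) with derivative v',
  v' is locally absolutely continuous with weak derivative v'', and
  v'' is locally p-integrable on [0,\<infinity>) for every p > 1.\<close>
definition W2p_loc :: "(real \<Rightarrow> real) \<Rightarrow> (real \<Rightarrow> real) \<Rightarrow> (real \<Rightarrow> real) \<Rightarrow> bool" where
  "W2p_loc v v' v'' \<longleftrightarrow>
     (\<forall>x\<ge>0. (v has_real_derivative v' x) (at x within {0..})) \<and>
     (\<forall>a b. 0 \<le> a \<longrightarrow> a \<le> b \<longrightarrow>
        set_integrable lborel {a..b} v'' \<and>
        v' b - v' a = set_lebesgue_integral lborel {a..b} v'') \<and>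
     (\<forall>p>1. \<forall>b\<ge>0. set_integrable lborel {0..b} (\<lambda>x. \<bar>v'' x\<bar> powr p))"

definition opL :: "real \<Rightarrow> real \<Rightarrow> real \<Rightarrow> real \<Rightarrow> real \<Rightarrow> real \<Rightarrow> real" where
  "opL \<mu> \<sigma> r w w' w'' = (1/2) * \<sigma>\<^sup>2 * w'' + \<mu> * w' - r * w"

definition opT :: "real \<Rightarrow> real \<Rightarrow> real" where
  "opT b w' = b * (1 - w') + (1 - b) * max 0 (1 - w')"

definition cc :: "real \<Rightarrow> nat \<Rightarrow> nat \<Rightarrow> real" where
  "cc cbar n i = cbar - real i * (cbar / real n)"

definition regime_solution ::
  "real \<Rightarrow> real \<Rightarrow> real \<Rightarrow> real \<Rightarrow> real \<Rightarrow> nat \<Rightarrow>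
   (nat \<Rightarrow> real \<Rightarrow> real) \<Rightarrow> (nat \<Rightarrow> real \<Rightarrow> real) \<Rightarrow> (nat \<Rightarrow> real \<Rightarrow> real) \<Rightarrow> bool" where
  "regime_solution \<mu> \<sigma> r cbar b n v v' v'' \<longleftrightarrow>
     (\<forall>i\<le>n.
        bounded (v i ` {0..}) \<and>
        W2p_loc (v i) (v' i) (v'' i) \<and>
        v i 0 = 0 \<and>
        (AE x in lborel. x > 0 \<longrightarrow>
           min (- opL \<mu> \<sigma> r (v i x) (v' i x) (v'' i x) - cc cbar n i * opT b (v' i x))
               (v i x - (if i = 0 then 0 else v (i - 1) x)) = 0))"

end

theory Submission
  imports Defs
begin

lemma T_lip: "0 \<le> b \<Longrightarrow> b \<le> 1 \<Longrightarrow> \<bar>opT b x - opT b y\<bar> \<le> \<bar>x - y\<bar>"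
proof -
  assume b: "0 \<le> b" "b \<le> 1"
  have m: "\<bar>max 0 (1 - x) - max 0 (1 - y)\<bar> \<le> \<bar>x - y\<bar>" by (auto simp: max_def)
  have "opT b x - opT b y = b * (y - x) + (1 - b) * (max 0 (1 - x) - max 0 (1 - y))"
    unfolding opT_def by (simp add: algebra_simps)
  also have "\<bar>\<dots>\<bar> \<le> b * \<bar>x - y\<bar> + (1 - b) * \<bar>x - y\<bar>"
  proof -
    have "\<bar>b * (y - x)\<bar> = b * \<bar>x - y\<bar>" using b by (simp add: abs_mult abs_minus_commute)
    moreover have "\<bar>(1 - b) * (max 0 (1 - x) - max 0 (1 - y))\<bar> \<le> (1 - b) * \<bar>x - y\<bar>"
      using b m by (simp add: abs_mult mult_left_mono)
    moreover have "\<bar>b * (y - x) + (1 - b) * (max 0 (1 - x) - max 0 (1 - y))\<bar> \<le> \<bar>b * (y - x)\<bar> + \<bar>(1 - b) * (max 0 (1 - x) - max 0 (1 - y))\<bar>"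
      by (rule abs_triangle_ineq)
    ultimately show ?thesis by linarith
  qed
  finally show ?thesis by (simp add: algebra_simps)
qed

lemma T_le1: "0 \<le> b \<Longrightarrow> b \<le> 1 \<Longrightarrow> 0 \<le> x \<Longrightarrow> opT b x \<le> 1"
proof -
  assume b: "0 \<le> b" "b \<le> 1" and x: "0 \<le> x"
  have "b * (1 - x) \<le> b * 1" using b x by (intro mult_left_mono) auto
  moreover have "(1 - b) * max 0 (1 - x) \<le> (1 - b) * 1" using b x by (intro mult_left_mono) auto
  ultimately show ?thesis unfolding opT_def by simp
qed

lemma T_cont[continuous_intros]: "continuous_on S f \<Longrightarrow> continuous_on S (\<lambda>t. opT b (f t))"
  unfolding opT_def by (intro continuous_intros)

lemma T_contat[continuous_intros]: "continuous F f \<Longrightarrow> continuous F (\<lambda>t. opT b (f t))"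
  unfolding opT_def by (intro continuous_intros)

lemma AE_cont_nonneg:
  fixes f :: "real \<Rightarrow> real"
  assumes cf: "continuous_on {0<..} f" and ae: "AE x in lborel. x > 0 \<longrightarrow> 0 \<le> f x" and x: "x > 0"
  shows "0 \<le> f x"
proof (rule ccontr)
  assume "\<not> 0 \<le> f x"
  hence fx: "f x < 0" by simp
  have "isCont f x" using cf x by (simp add: continuous_on_eq_continuous_at)
  hence "eventually (\<lambda>y. f y < 0) (at x)"
    using fx by (metis order_tendstoD(2) isCont_def)
  then obtain d where d: "d > 0" "\<And>y. y \<noteq> x \<Longrightarrow> dist y x < d \<Longrightarrow> f y < 0"
    by (auto simp: eventually_at)
  have ae2: "AE y in lborel. y \<notin> {x<..<x+d}"
    using ae
  proof eventually_elim
    case (elim y)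
    show ?case
    proof
      assume "y \<in> {x<..<x+d}"
      with d(2)[of y] x elim show False by (auto simp: dist_real_def)
    qed
  qed
  have "emeasure lborel {x<..<x+d} = 0"
    using ae2 by (subst (asm) AE_iff_measurable[of "{x<..<x+d}"]) auto
  thus False using d by simp
qed

lemma W2_cont:
  assumes w: "W2p_loc v v' v''"
  shows "continuous_on {0<..} v'"
proof -
  have c: "continuous_on {0..b} v'" if b: "b \<ge> 0" for b
  proof -
    have ii: "v'' integrable_on {0..b}"
      using w b set_borel_integral_eq_integral(1) unfolding W2p_loc_def by blast
    have "continuous_on {0..b} (\<lambda>x. v' 0 + integral {0..x} v'')"
      by (intro continuous_intros indefinite_integral_continuous_1 ii)
    moreover have "v' x = v' 0 + integral {0..x} v''" if "x \<in> {0..b}" for x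
    proof -
      have "set_integrable lborel {0..x} v''" "v' x - v' 0 = set_lebesgue_integral lborel {0..x} v''"
        using w that unfolding W2p_loc_def by auto
      thus ?thesis using set_borel_integral_eq_integral(2) by fastforce
    qed
    ultimately show ?thesis by (metis (no_types, lifting) continuous_on_cong)
  qed
  show ?thesis
  proof (intro continuous_at_imp_continuous_on ballI)
    fix x :: real assume "x \<in> {0<..}"
    hence x: "x > 0" by simp
    have "continuous_on {0<..<x+1} v'"
      proof (rule continuous_on_subset[OF c[of "x+1"]])
      show "0 \<le> x + 1" using x by simp
      show "{0<..<x+1} \<subseteq> {0..x+1}" by auto
    qed
    thus "isCont v' x" using x by (simp add: continuous_on_eq_continuous_at)
  qed
qed

lemma W2_contv:
  assumes w: "W2p_loc v v' v''"
  shows "continuous_on {0..} v"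
proof -
  have "\<forall>x\<in>{0..}. continuous (at x within {0..}) v"
    using w unfolding W2p_loc_def by (auto intro: DERIV_continuous)
  thus ?thesis by (simp add: continuous_on_eq_continuous_within)
qed

lemma int_bound_upper:
  fixes f B :: "real \<Rightarrow> real"
  assumes si: "set_integrable lborel {a..b} f" and cB: "continuous_on {a..b} B"
    and ae: "AE t in lborel. t \<in> {a..b} \<longrightarrow> f t \<le> B t"
  shows "(LINT t:{a..b}|lborel. f t) \<le> integral {a..b} B"
proof -
  have sB: "set_integrable lborel {a..b} B" by (rule borel_integrable_atLeastAtMost'[OF cB])
  have "(LINT t:{a..b}|lborel. f t) \<le> (LINT t:{a..b}|lborel. B t)"
    by (rule set_integral_mono_AE[OF si sB]) (use ae in auto)
  thus ?thesis using set_borel_integral_eq_integral(2)[OF sB] by simp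
qed

lemma int_bound_lower:
  fixes f B :: "real \<Rightarrow> real"
  assumes si: "set_integrable lborel {a..b} f" and cB: "continuous_on {a..b} B"
    and ae: "AE t in lborel. t \<in> {a..b} \<longrightarrow> B t \<le> f t"
  shows "integral {a..b} B \<le> (LINT t:{a..b}|lborel. f t)"
proof -
  have sB: "set_integrable lborel {a..b} B" by (rule borel_integrable_atLeastAtMost'[OF cB])
  have "(LINT t:{a..b}|lborel. B t) \<le> (LINT t:{a..b}|lborel. f t)"
    by (rule set_integral_mono_AE[OF sB si]) (use ae in auto)
  thus ?thesis using set_borel_integral_eq_integral(2)[OF sB] by simp
qed


lemma comparison:
  fixes u u' W W' g :: "real \<Rightarrow> real" and \<sigma> r \<mu> c b h1 h2 :: real
  assumes sig: "\<sigma> > 0" and rp: "r > 0" and c0: "c \<ge> 0" and b0: "0 \<le> b" and b1: "b \<le> 1"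
    and h1: "h1 \<ge> 0" and h2: "h2 \<ge> 0"
    and du: "\<forall>x\<ge>0. (u has_real_derivative u' x) (at x within {0..})"
    and dW: "\<forall>x\<ge>0. (W has_real_derivative W' x) (at x within {0..})"
    and cu': "continuous_on {0<..} u'" and cW': "continuous_on {0<..} W'"
    and bdu: "bounded (u ` {0..})" and bdW: "bounded (W ` {0..})"
    and gW: "\<forall>x\<ge>0. g (x + h1) \<le> W (x + h2)"
    and bnd: "u h1 \<le> W h2"
    and sub: "\<forall>x y. 0 < x \<longrightarrow> x \<le> y \<longrightarrow> (\<forall>t\<in>{x..y}. g t < u t) \<longrightarrow>
        integral {x..y} (\<lambda>t. (2/\<sigma>\<^sup>2) * (r * u t - \<mu> * u' t - c * opT b (u' t))) \<le> u' y - u' x"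
    and super: "\<forall>x y. 0 < x \<longrightarrow> x \<le> y \<longrightarrow>
        W' y - W' x \<le> integral {x..y} (\<lambda>t. (2/\<sigma>\<^sup>2) * (r * W t - \<mu> * W' t - c * opT b (W' t)))"
  shows "\<forall>x\<ge>0. u (x + h1) \<le> W (x + h2)"
proof (rule ccontr)
  assume "\<not> ?thesis"
  then obtain x0 where x0: "x0 \<ge> 0" "u (x0 + h1) > W (x0 + h2)" by auto
  define D where "D x = u (x + h1) - W (x + h2)" for x
  define M where "M = D x0"
  have M: "M > 0" using x0 by (simp add: M_def D_def)
  have x0p: "x0 > 0" using x0 bnd by (cases "x0 = 0") auto
  obtain Bu where Bu: "\<forall>y\<in>u ` {0..}. \<bar>y\<bar> \<le> Bu" using bdu bounded_real by blast
  obtain BW where BW: "\<forall>y\<in>W ` {0..}. \<bar>y\<bar> \<le> BW" using bdW bounded_real by blast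
  define Bd where "Bd = Bu + BW"
  have DB: "D x \<le> Bd" if "x \<ge> 0" for x
  proof -
    have "\<bar>u (x + h1)\<bar> \<le> Bu" using Bu that h1 by auto
    moreover have "\<bar>W (x + h2)\<bar> \<le> BW" using BW that h2 by auto
    ultimately show ?thesis unfolding D_def Bd_def by linarith
  qed
  define \<epsilon> where "\<epsilon> = min (M / (2 * x0)) (r * M / (4 * (\<bar>\<mu>\<bar> + c + 1)))"
  have ep: "\<epsilon> > 0" using M x0p rp c0 unfolding \<epsilon>_def by (auto intro!: divide_pos_pos)
  have ep1: "\<epsilon> * x0 \<le> M / 2"
  proof -
    have "\<epsilon> \<le> M / (2 * x0)" unfolding \<epsilon>_def by simp
    hence "\<epsilon> * x0 \<le> M / (2 * x0) * x0" using x0p by (intro mult_right_mono) auto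
    thus ?thesis using x0p by simp
  qed
  have ep2: "\<epsilon> * (\<bar>\<mu>\<bar> + c) \<le> r * M / 4"
  proof -
    have "\<epsilon> \<le> r * M / (4 * (\<bar>\<mu>\<bar> + c + 1))" unfolding \<epsilon>_def by simp
    hence "\<epsilon> * (\<bar>\<mu>\<bar> + c + 1) \<le> r * M / (4 * (\<bar>\<mu>\<bar> + c + 1)) * (\<bar>\<mu>\<bar> + c + 1)"
      using c0 by (intro mult_right_mono) auto
    also have "\<dots> = r * M / 4" using c0 by (simp add: field_simps)
    finally show ?thesis using ep by (simp add: algebra_simps)
  qed
  define F where "F x = D x - \<epsilon> * x" for x
  define R where "R = max x0 (Bd / \<epsilon>)"
  have contu: "continuous_on {0..} u"
    using du by (auto simp: continuous_on_eq_continuous_within intro: DERIV_continuous)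
  have contW: "continuous_on {0..} W"
    using dW by (auto simp: continuous_on_eq_continuous_within intro: DERIV_continuous)
  have contF: "continuous_on {0..R} F"
  proof -
    have "continuous_on {0..R} (\<lambda>x. u (x + h1))"
      by (rule continuous_on_compose2[OF contu]) (auto intro!: continuous_intros simp: h1)
    moreover have "continuous_on {0..R} (\<lambda>x. W (x + h2))"
      by (rule continuous_on_compose2[OF contW]) (auto intro!: continuous_intros simp: h2)
    ultimately show ?thesis unfolding F_def D_def by (intro continuous_intros)
  qed
  obtain xs where xs: "xs \<in> {0..R}" "\<forall>y\<in>{0..R}. F y \<le> F xs"
    using continuous_attains_sup[OF compact_Icc _ contF] x0 unfolding R_def by fastforce
  have Fx0: "F x0 \<ge> M / 2" using ep1 unfolding F_def M_def by simp
  have Fxs: "F xs \<ge> M / 2" using xs x0 Fx0 unfolding R_def by force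
  have Fmax: "F y \<le> F xs" if "y \<ge> 0" for y
  proof (cases "y \<le> R")
    case True thus ?thesis using xs that by auto
  next
    case False
    hence "Bd / \<epsilon> < y" unfolding R_def by simp
    hence "Bd < \<epsilon> * y" using ep by (simp add: field_simps)
    hence "F y < 0" using DB[OF that] unfolding F_def by simp
    thus ?thesis using Fxs M by simp
  qed
  have xsp: "xs > 0"
  proof (rule ccontr)
    assume "\<not> xs > 0" hence "xs = 0" using xs by auto
    hence "F xs \<le> 0" using bnd unfolding F_def D_def by simp
    thus False using Fxs M by simp
  qed
  have Dxs: "D xs \<ge> M / 2" using Fxs xsp ep unfolding F_def
    by (smt (verit) mult_pos_pos)
  have du_at: "(u has_real_derivative u' x) (at x)" if "x > 0" for x
  proof -
    have "x \<in> interior {0..}" using that by simp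
    thus ?thesis using du that at_within_interior[of x "{0..}"] by (metis less_imp_le)
  qed
  have dW_at: "(W has_real_derivative W' x) (at x)" if "x > 0" for x
  proof -
    have "x \<in> interior {0..}" using that by simp
    thus ?thesis using dW that at_within_interior[of x "{0..}"] by (metis less_imp_le)
  qed
  have dF: "(F has_real_derivative (u' (x + h1) - W' (x + h2) - \<epsilon>)) (at x)" if "x > 0" for x
  proof -
    have a: "((\<lambda>x. u (x + h1)) has_real_derivative u' (x + h1)) (at x)"
      using DERIV_chain2[OF du_at[of "x+h1"] DERIV_add[OF DERIV_ident DERIV_const[of h1]]] that h1
      by simp
    have b: "((\<lambda>x. W (x + h2)) has_real_derivative W' (x + h2)) (at x)"
      using DERIV_chain2[OF dW_at[of "x+h2"] DERIV_add[OF DERIV_ident DERIV_const[of h2]]] that h2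
      by simp
    have "((\<lambda>x. u (x + h1) - W (x + h2) - \<epsilon> * x) has_real_derivative
        (u' (x + h1) - W' (x + h2) - \<epsilon> * 1)) (at x)"
      by (intro DERIV_diff a b DERIV_cmult DERIV_ident)
    thus ?thesis unfolding F_def D_def by simp
  qed
  have Dd: "u' (xs + h1) - W' (xs + h2) = \<epsilon>"
  proof -
    have "u' (xs + h1) - W' (xs + h2) - \<epsilon> = 0"
    proof (rule DERIV_local_max[OF dF[OF xsp] xsp])
      show "\<forall>y. \<bar>xs - y\<bar> < xs \<longrightarrow> F y \<le> F xs" using Fmax by auto
    qed
    thus ?thesis by simp
  qed
  define A where "A t = (2/\<sigma>\<^sup>2) * (r * u (t + h1) - \<mu> * u' (t + h1) - c * opT b (u' (t + h1)))" for t
  define Bw where "Bw t = (2/\<sigma>\<^sup>2) * (r * W (t + h2) - \<mu> * W' (t + h2) - c * opT b (W' (t + h2)))" for t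
  define \<kappa> where "\<kappa> = (2/\<sigma>\<^sup>2) * (r * M / 4)"
  have kp: "\<kappa> > 0" unfolding \<kappa>_def using sig rp M by simp
  have ABxs: "A xs - Bw xs \<ge> \<kappa>"
  proof -
    have "A xs - Bw xs = (2/\<sigma>\<^sup>2) * (r * D xs - \<mu> * \<epsilon> - c * (opT b (u' (xs + h1)) - opT b (W' (xs + h2))))"
    proof -
      have e: "u' (xs + h1) = W' (xs + h2) + \<epsilon>" using Dd by simp
      show ?thesis unfolding A_def Bw_def D_def e by (simp add: algebra_simps)
    qed
    moreover have "c * (opT b (u' (xs + h1)) - opT b (W' (xs + h2))) \<le> c * \<epsilon>"
    proof -
      have "opT b (u' (xs + h1)) - opT b (W' (xs + h2)) \<le> \<epsilon>"
        using T_lip[OF b0 b1, of "u' (xs + h1)" "W' (xs + h2)"] Dd ep by simp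
      thus ?thesis using c0 by (simp add: mult_left_mono)
    qed
    moreover have "\<mu> * \<epsilon> \<le> \<bar>\<mu>\<bar> * \<epsilon>" using ep by (simp add: mult_right_mono)
    moreover have "r * D xs \<ge> r * (M / 2)" using Dxs rp by simp
    ultimately have "r * D xs - \<mu> * \<epsilon> - c * (opT b (u' (xs + h1)) - opT b (W' (xs + h2))) \<ge> r * M / 4"
      using ep2 by (simp add: algebra_simps)
    hence "(2/\<sigma>\<^sup>2) * (r * M / 4) \<le> (2/\<sigma>\<^sup>2) * (r * D xs - \<mu> * \<epsilon> - c * (opT b (u' (xs + h1)) - opT b (W' (xs + h2))))"
      using sig by (intro mult_left_mono) auto
    thus ?thesis using \<open>A xs - Bw xs = _\<close> unfolding \<kappa>_def by simp
  qed
  have contA: "continuous_on {0<..} A"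
  proof -
    have cu0: "continuous_on {0<..} u" using contu by (rule continuous_on_subset) auto
    have s: "(\<lambda>t. t + h1) ` {0<..} \<subseteq> {0<..}" using h1 by auto
    have "continuous_on {0<..} (\<lambda>t. u (t + h1))"
      by (rule continuous_on_compose2[OF cu0 _ s]) (intro continuous_intros)
    moreover have "continuous_on {0<..} (\<lambda>t. u' (t + h1))"
      by (rule continuous_on_compose2[OF cu' _ s]) (intro continuous_intros)
    ultimately show ?thesis unfolding A_def by (intro continuous_intros)
  qed
  have contB: "continuous_on {0<..} Bw"
  proof -
    have cW0: "continuous_on {0<..} W" using contW by (rule continuous_on_subset) auto
    have s: "(\<lambda>t. t + h2) ` {0<..} \<subseteq> {0<..}" using h2 by auto
    have "continuous_on {0<..} (\<lambda>t. W (t + h2))"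
      by (rule continuous_on_compose2[OF cW0 _ s]) (intro continuous_intros)
    moreover have "continuous_on {0<..} (\<lambda>t. W' (t + h2))"
      by (rule continuous_on_compose2[OF cW' _ s]) (intro continuous_intros)
    ultimately show ?thesis unfolding Bw_def by (intro continuous_intros)
  qed
  have contD: "continuous_on {0<..} D"
  proof -
    have "continuous_on {0<..} (\<lambda>x. u (x + h1))"
      by (rule continuous_on_compose2[OF contu]) (auto intro!: continuous_intros simp: h1)
    moreover have "continuous_on {0<..} (\<lambda>x. W (x + h2))"
      by (rule continuous_on_compose2[OF contW]) (auto intro!: continuous_intros simp: h2)
    ultimately show ?thesis unfolding D_def by (intro continuous_intros)
  qed
  define H where "H t = min (A t - Bw t - \<kappa> / 2) (D t)" for t
  have "isCont H xs"
  proof -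
    have "continuous_on {0<..} H" unfolding H_def
      by (intro continuous_intros contA contB contD)
    thus ?thesis using xsp by (simp add: continuous_on_eq_continuous_at)
  qed
  moreover have "H xs > 0" unfolding H_def using ABxs Dxs kp M by simp
  ultimately have "eventually (\<lambda>t. 0 < H t) (at xs)"
    by (metis order_tendstoD(1) isCont_def)
  then obtain \<rho> where rho: "\<rho> > 0" "\<And>t. t \<noteq> xs \<Longrightarrow> dist t xs < \<rho> \<Longrightarrow> 0 < H t"
    by (auto simp: eventually_at)
  have Hpos: "0 < H t" if "xs \<le> t" "t < xs + \<rho>" for t
  proof (cases "t = xs")
    case True thus ?thesis using \<open>H xs > 0\<close> by simp
  next
    case False thus ?thesis using rho that by (auto simp: dist_real_def)
  qed
  define y where "y = xs + \<rho> / 2"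
  have y: "xs < y" "y < xs + \<rho>" using rho unfolding y_def by auto
  have key: "u' (t + h1) - W' (t + h2) - \<epsilon> > 0" if t: "xs < t" "t \<le> y" for t
  proof -
    have ci: "continuous_on {xs..t} A" "continuous_on {xs..t} Bw"
      using contA contB xsp by (auto intro: continuous_on_subset)
    have I1: "integral {xs..t} A \<le> u' (t + h1) - u' (xs + h1)"
    proof -
      have "integral {xs + h1..t + h1} (\<lambda>t. (2/\<sigma>\<^sup>2) * (r * u t - \<mu> * u' t - c * opT b (u' t)))
          \<le> u' (t + h1) - u' (xs + h1)"
      proof (rule sub[rule_format])
        show "0 < xs + h1" using xsp h1 by simp
        show "xs + h1 \<le> t + h1" using t by simp
        show "g s < u s" if s: "s \<in> {xs + h1..t + h1}" for s
        proof -
          define q where "q = s - h1"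
          have q: "xs \<le> q" "q < xs + \<rho>" using s t y unfolding q_def by auto
          have "D q > 0" using Hpos[OF q] unfolding H_def by simp
          moreover have "g (q + h1) \<le> W (q + h2)" using gW q xsp by auto
          ultimately show "g s < u s" unfolding D_def q_def by simp
        qed
      qed
      moreover have "integral {xs..t} A = integral {xs + h1..t + h1} (\<lambda>t. (2/\<sigma>\<^sup>2) * (r * u t - \<mu> * u' t - c * opT b (u' t)))"
        using integral_shift_Icc_real[of xs t "(\<lambda>t. (2/\<sigma>\<^sup>2) * (r * u t - \<mu> * u' t - c * opT b (u' t)))" h1]
        unfolding A_def comp_def by (simp add: add.commute)
      ultimately show ?thesis by simp
    qed
    have I2: "W' (t + h2) - W' (xs + h2) \<le> integral {xs..t} Bw"
    proof -
      have "W' (t + h2) - W' (xs + h2) \<le> integral {xs + h2..t + h2} (\<lambda>t. (2/\<sigma>\<^sup>2) * (r * W t - \<mu> * W' t - c * opT b (W' t)))"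
        using super xsp h2 t by auto
      moreover have "integral {xs..t} Bw = integral {xs + h2..t + h2} (\<lambda>t. (2/\<sigma>\<^sup>2) * (r * W t - \<mu> * W' t - c * opT b (W' t)))"
        using integral_shift_Icc_real[of xs t "(\<lambda>t. (2/\<sigma>\<^sup>2) * (r * W t - \<mu> * W' t - c * opT b (W' t)))" h2]
        unfolding Bw_def comp_def by (simp add: add.commute)
      ultimately show ?thesis by simp
    qed
    have I3: "integral {xs..t} (\<lambda>s. \<kappa> / 2) \<le> integral {xs..t} (\<lambda>s. A s - Bw s)"
    proof (rule integral_le)
      show "(\<lambda>s. \<kappa> / 2) integrable_on {xs..t}" by (rule integrable_const_ivl)
      show "(\<lambda>s. A s - Bw s) integrable_on {xs..t}"
        using ci by (intro integrable_continuous_interval continuous_intros)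
      show "\<And>s. s \<in> {xs..t} \<Longrightarrow> \<kappa> / 2 \<le> A s - Bw s"
      proof -
        fix s assume "s \<in> {xs..t}"
        hence "xs \<le> s" "s < xs + \<rho>" using t y by auto
        thus "\<kappa> / 2 \<le> A s - Bw s" using Hpos unfolding H_def by fastforce
      qed
    qed
    have I4: "integral {xs..t} (\<lambda>s. A s - Bw s) = integral {xs..t} A - integral {xs..t} Bw"
      by (rule integral_diff) (use ci in \<open>auto intro: integrable_continuous_interval\<close>)
    have "integral {xs..t} (\<lambda>s. \<kappa> / 2) = (t - xs) * (\<kappa> / 2)" using t by simp
    moreover have "(t - xs) * (\<kappa> / 2) > 0" using t kp by simp
    ultimately show ?thesis using I1 I2 I3 I4 Dd by linarith
  qed
  have "\<exists>z. xs < z \<and> z < y \<and> F y - F xs = (y - xs) * (u' (z + h1) - W' (z + h2) - \<epsilon>)"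
    by (rule MVT2[OF y(1)]) (use dF xsp in auto)
  then obtain z where z: "xs < z" "z < y" "F y - F xs = (y - xs) * (u' (z + h1) - W' (z + h2) - \<epsilon>)"
    by blast
  have "F y - F xs > 0" using z key[of z] y by simp
  moreover have "F y \<le> F xs" using Fmax y xsp by simp
  ultimately show False by simp
qed


lemma super_from:
  fixes v v' v'' :: "real \<Rightarrow> real"
  assumes w: "W2p_loc v v' v''" and sig: "\<sigma> > 0" and rp: "r \<ge> 0" and k: "k \<ge> 0"
    and ae: "AE x in lborel. x > 0 \<longrightarrow> 0 \<le> - opL \<mu> \<sigma> r (v x) (v' x) (v'' x) - c * opT b (v' x)"
  shows "\<forall>x y. 0 < x \<longrightarrow> x \<le> y \<longrightarrow>
        v' y - v' x \<le> integral {x..y} (\<lambda>t. (2/\<sigma>\<^sup>2) * (r * (v t + k) - \<mu> * v' t - c * opT b (v' t)))"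
proof (intro allI impI)
  fix x y :: real assume x: "0 < x" "x \<le> y"
  have si: "set_integrable lborel {x..y} v''" and eq: "v' y - v' x = set_lebesgue_integral lborel {x..y} v''"
    using w x unfolding W2p_loc_def by auto
  have cv: "continuous_on {x..y} v" by (rule continuous_on_subset[OF W2_contv[OF w]]) (use x in auto)
  have cv': "continuous_on {x..y} v'" by (rule continuous_on_subset[OF W2_cont[OF w]]) (use x in auto)
  have "(LINT t:{x..y}|lborel. v'' t) \<le> integral {x..y} (\<lambda>t. (2/\<sigma>\<^sup>2) * (r * (v t + k) - \<mu> * v' t - c * opT b (v' t)))"
  proof (rule int_bound_upper[OF si])
    show "continuous_on {x..y} (\<lambda>t. (2/\<sigma>\<^sup>2) * (r * (v t + k) - \<mu> * v' t - c * opT b (v' t)))"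
      by (intro continuous_intros cv cv')
    show "AE t in lborel. t \<in> {x..y} \<longrightarrow> v'' t \<le> (2/\<sigma>\<^sup>2) * (r * (v t + k) - \<mu> * v' t - c * opT b (v' t))"
      using ae
    proof eventually_elim
      case (elim t)
      show ?case
      proof
        assume t: "t \<in> {x..y}"
        hence "0 \<le> - opL \<mu> \<sigma> r (v t) (v' t) (v'' t) - c * opT b (v' t)" using elim x by auto
        hence h: "(1/2) * \<sigma>\<^sup>2 * v'' t \<le> r * v t - \<mu> * v' t - c * opT b (v' t)"
          unfolding opL_def by simp
        have s2: "\<sigma>\<^sup>2 > 0" using sig by simp
        have "v'' t = (2/\<sigma>\<^sup>2) * ((1/2) * \<sigma>\<^sup>2 * v'' t)" using s2 by simp
        also have "\<dots> \<le> (2/\<sigma>\<^sup>2) * (r * v t - \<mu> * v' t - c * opT b (v' t))"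
          using h s2 by (intro mult_left_mono) auto
        also have "\<dots> \<le> (2/\<sigma>\<^sup>2) * (r * (v t + k) - \<mu> * v' t - c * opT b (v' t))"
          using s2 rp k by (intro mult_left_mono) (auto simp: algebra_simps)
        finally show "v'' t \<le> (2/\<sigma>\<^sup>2) * (r * (v t + k) - \<mu> * v' t - c * opT b (v' t))" .
      qed
    qed
  qed
  thus "v' y - v' x \<le> integral {x..y} (\<lambda>t. (2/\<sigma>\<^sup>2) * (r * (v t + k) - \<mu> * v' t - c * opT b (v' t)))"
    using eq by simp
qed

lemma sub_from:
  fixes v v' v'' g :: "real \<Rightarrow> real"
  assumes w: "W2p_loc v v' v''" and sig: "\<sigma> > 0"
    and ae: "AE x in lborel. x > 0 \<longrightarrow> g x < v x \<longrightarrow> - opL \<mu> \<sigma> r (v x) (v' x) (v'' x) - c * opT b (v' x) \<le> 0"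
  shows "\<forall>x y. 0 < x \<longrightarrow> x \<le> y \<longrightarrow> (\<forall>t\<in>{x..y}. g t < v t) \<longrightarrow>
        integral {x..y} (\<lambda>t. (2/\<sigma>\<^sup>2) * (r * v t - \<mu> * v' t - c * opT b (v' t))) \<le> v' y - v' x"
proof (intro allI impI)
  fix x y :: real assume x: "0 < x" "x \<le> y" and gt: "\<forall>t\<in>{x..y}. g t < v t"
  have si: "set_integrable lborel {x..y} v''" and eq: "v' y - v' x = set_lebesgue_integral lborel {x..y} v''"
    using w x unfolding W2p_loc_def by auto
  have cv: "continuous_on {x..y} v" by (rule continuous_on_subset[OF W2_contv[OF w]]) (use x in auto)
  have cv': "continuous_on {x..y} v'" by (rule continuous_on_subset[OF W2_cont[OF w]]) (use x in auto)
  have "integral {x..y} (\<lambda>t. (2/\<sigma>\<^sup>2) * (r * v t - \<mu> * v' t - c * opT b (v' t))) \<le> (LINT t:{x..y}|lborel. v'' t)"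
  proof (rule int_bound_lower[OF si])
    show "continuous_on {x..y} (\<lambda>t. (2/\<sigma>\<^sup>2) * (r * v t - \<mu> * v' t - c * opT b (v' t)))"
      by (intro continuous_intros cv cv')
    show "AE t in lborel. t \<in> {x..y} \<longrightarrow> (2/\<sigma>\<^sup>2) * (r * v t - \<mu> * v' t - c * opT b (v' t)) \<le> v'' t"
      using ae
    proof eventually_elim
      case (elim t)
      show ?case
      proof
        assume t: "t \<in> {x..y}"
        hence "- opL \<mu> \<sigma> r (v t) (v' t) (v'' t) - c * opT b (v' t) \<le> 0" using elim x gt by auto
        hence h: "r * v t - \<mu> * v' t - c * opT b (v' t) \<le> (1/2) * \<sigma>\<^sup>2 * v'' t"
          unfolding opL_def by simp
        have s2: "\<sigma>\<^sup>2 > 0" using sig by simp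
        have "(2/\<sigma>\<^sup>2) * (r * v t - \<mu> * v' t - c * opT b (v' t)) \<le> (2/\<sigma>\<^sup>2) * ((1/2) * \<sigma>\<^sup>2 * v'' t)"
          using h s2 by (intro mult_left_mono) auto
        also have "\<dots> = v'' t" using s2 by simp
        finally show "(2/\<sigma>\<^sup>2) * (r * v t - \<mu> * v' t - c * opT b (v' t)) \<le> v'' t" .
      qed
    qed
  qed
  thus "integral {x..y} (\<lambda>t. (2/\<sigma>\<^sup>2) * (r * v t - \<mu> * v' t - c * opT b (v' t))) \<le> v' y - v' x"
    using eq by simp
qed

lemma deriv_bounds:
  fixes f :: "real \<Rightarrow> real"
  assumes d: "(f has_real_derivative d) (at x within {0..})" and x: "x \<ge> 0"
    and q: "\<And>y. y \<ge> 0 \<Longrightarrow> y \<noteq> x \<Longrightarrow> 0 \<le> (f y - f x) / (y - x) \<and> (f y - f x) / (y - x) \<le> K"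
  shows "0 \<le> d \<and> d \<le> K"
proof -
  have lim: "((\<lambda>y. (f y - f x) / (y - x)) \<longlongrightarrow> d) (at x within {0..})"
    using d by (simp add: has_field_derivative_iff)
  have nt: "\<not> trivial_limit (at x within {0..})"
  proof -
    have "x islimpt {0..}"
      unfolding islimpt_approachable
    proof (intro allI impI)
      fix e :: real assume e: "e > 0"
      show "\<exists>x'\<in>{0..}. x' \<noteq> x \<and> dist x' x < e"
        by (rule bexI[of _ "x + e/2"]) (use e x in \<open>auto simp: dist_real_def\<close>)
    qed
    thus ?thesis by (simp add: trivial_limit_within)
  qed
  have ev: "eventually (\<lambda>y. 0 \<le> (f y - f x) / (y - x) \<and> (f y - f x) / (y - x) \<le> K) (at x within {0..})"
    unfolding eventually_at by (rule exI[of _ 1]) (simp add: q)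
  have "0 \<le> d" by (rule tendsto_lowerbound[OF lim _ nt]) (use ev in \<open>auto elim: eventually_mono\<close>)
  moreover have "d \<le> K" by (rule tendsto_upperbound[OF lim _ nt]) (use ev in \<open>auto elim: eventually_mono\<close>)
  ultimately show ?thesis by simp
qed


lemma w_pointwise:
  fixes A lam c \<mu> \<sigma> r b t :: real
  assumes sig: "\<sigma> > 0" and rp: "r > 0" and b0: "0 \<le> b" and b1: "b \<le> 1" and c0: "0 \<le> c" and cA: "c \<le> r * A"
    and A0: "A \<ge> 0" and lam: "lam \<ge> 1" and lamb: "\<sigma>\<^sup>2 * lam / 2 \<ge> \<bar>\<mu>\<bar> + r"
  shows "- A * lam\<^sup>2 * exp (- lam * t) \<le> (2/\<sigma>\<^sup>2) * (r * (A * (1 - exp (- lam * t))) - \<mu> * (A * lam * exp (- lam * t))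
           - c * opT b (A * lam * exp (- lam * t)))"
proof -
  define e where "e = exp (- lam * t)"
  have e0: "e > 0" unfolding e_def by simp
  have wp: "A * lam * e \<ge> 0" using A0 lam e0 by simp
  have T1: "c * opT b (A * lam * e) \<le> c" using T_le1[OF b0 b1 wp] c0 by (simp add: mult_left_le)
  have q: "\<sigma>\<^sup>2 * lam\<^sup>2 / 2 \<ge> \<mu> * lam + r"
  proof -
    have "\<sigma>\<^sup>2 * lam\<^sup>2 / 2 = lam * (\<sigma>\<^sup>2 * lam / 2)" by (simp add: power2_eq_square)
    also have "\<dots> \<ge> lam * (\<bar>\<mu>\<bar> + r)" using lamb lam by (intro mult_left_mono) auto
    finally have "\<sigma>\<^sup>2 * lam\<^sup>2 / 2 \<ge> lam * \<bar>\<mu>\<bar> + lam * r" by (simp add: algebra_simps)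
    moreover have "lam * \<bar>\<mu>\<bar> \<ge> \<mu> * lam" using lam by (simp add: mult.commute mult_left_mono abs_ge_self)
    moreover have "lam * r \<ge> r" using lam rp by simp
    ultimately show ?thesis by linarith
  qed
  have "A * e * (\<sigma>\<^sup>2 * lam\<^sup>2 / 2 - \<mu> * lam - r) \<ge> 0" using A0 e0 q by simp
  hence key: "(1/2) * \<sigma>\<^sup>2 * (- A * lam\<^sup>2 * e) \<le> r * (A * (1 - e)) - \<mu> * (A * lam * e) - c * opT b (A * lam * e)"
    using T1 cA by (simp add: algebra_simps)
  have s2: "\<sigma>\<^sup>2 > 0" using sig by simp
  have "- A * lam\<^sup>2 * e = (2/\<sigma>\<^sup>2) * ((1/2) * \<sigma>\<^sup>2 * (- A * lam\<^sup>2 * e))" using s2 by simp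
  also have "\<dots> \<le> (2/\<sigma>\<^sup>2) * (r * (A * (1 - e)) - \<mu> * (A * lam * e) - c * opT b (A * lam * e))"
    using key s2 by (intro mult_left_mono) auto
  finally show ?thesis unfolding e_def .
qed

lemma w_super:
  fixes A lam c \<mu> \<sigma> r b :: real
  assumes sig: "\<sigma> > 0" and rp: "r > 0" and b0: "0 \<le> b" and b1: "b \<le> 1" and c0: "0 \<le> c" and cA: "c \<le> r * A"
    and A0: "A \<ge> 0" and lam: "lam \<ge> 1" and lamb: "\<sigma>\<^sup>2 * lam / 2 \<ge> \<bar>\<mu>\<bar> + r"
  shows "\<forall>x y. 0 < x \<longrightarrow> x \<le> y \<longrightarrow> (\<lambda>x. A * lam * exp (- lam * x)) y - (\<lambda>x. A * lam * exp (- lam * x)) x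
     \<le> integral {x..y} (\<lambda>t. (2/\<sigma>\<^sup>2) * (r * (\<lambda>x. A * (1 - exp (- lam * x))) t - \<mu> * (\<lambda>x. A * lam * exp (- lam * x)) t
           - c * opT b ((\<lambda>x. A * lam * exp (- lam * x)) t)))"
proof (intro allI impI)
  fix x y :: real assume x: "0 < x" "x \<le> y"
  have ftc: "((\<lambda>t. - A * lam\<^sup>2 * exp (- lam * t)) has_integral
      (A * lam * exp (- lam * y) - A * lam * exp (- lam * x))) {x..y}"
  proof (rule fundamental_theorem_of_calculus[OF x(2)])
    fix t assume "t \<in> {x..y}"
    have "((\<lambda>t. A * lam * exp (- lam * t)) has_real_derivative (A * lam * (exp (- lam * t) * (- lam * 1)))) (at t)"
      by (intro derivative_eq_intros) auto
    hence "((\<lambda>t. A * lam * exp (- lam * t)) has_real_derivative (- A * lam\<^sup>2 * exp (- lam * t))) (at t within {x..y})"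
      by (auto simp: power2_eq_square algebra_simps intro: has_field_derivative_at_within)
    thus "((\<lambda>t. A * lam * exp (- lam * t)) has_vector_derivative (- A * lam\<^sup>2 * exp (- lam * t))) (at t within {x..y})"
      by (simp add: has_real_derivative_iff_has_vector_derivative)
  qed
  have "integral {x..y} (\<lambda>t. - A * lam\<^sup>2 * exp (- lam * t)) \<le> integral {x..y} (\<lambda>t. (2/\<sigma>\<^sup>2) * (r * (A * (1 - exp (- lam * t))) - \<mu> * (A * lam * exp (- lam * t))
           - c * opT b (A * lam * exp (- lam * t))))"
  proof (rule integral_le)
    show "(\<lambda>t. - A * lam\<^sup>2 * exp (- lam * t)) integrable_on {x..y}" using ftc by blast
    show "(\<lambda>t. (2/\<sigma>\<^sup>2) * (r * (A * (1 - exp (- lam * t))) - \<mu> * (A * lam * exp (- lam * t))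
           - c * opT b (A * lam * exp (- lam * t)))) integrable_on {x..y}"
      by (intro integrable_continuous_interval continuous_intros)
    show "\<And>t. t \<in> {x..y} \<Longrightarrow> - A * lam\<^sup>2 * exp (- lam * t) \<le> (2/\<sigma>\<^sup>2) * (r * (A * (1 - exp (- lam * t))) - \<mu> * (A * lam * exp (- lam * t))
           - c * opT b (A * lam * exp (- lam * t)))"
      by (rule w_pointwise[OF sig rp b0 b1 c0 cA A0 lam lamb])
  qed
  thus "(\<lambda>x. A * lam * exp (- lam * x)) y - (\<lambda>x. A * lam * exp (- lam * x)) x
     \<le> integral {x..y} (\<lambda>t. (2/\<sigma>\<^sup>2) * (r * (\<lambda>x. A * (1 - exp (- lam * x))) t - \<mu> * (\<lambda>x. A * lam * exp (- lam * x)) t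
           - c * opT b ((\<lambda>x. A * lam * exp (- lam * x)) t)))"
    using integral_unique[OF ftc] by simp
qed


lemma quot_bounds:
  fixes f :: "real \<Rightarrow> real"
  assumes mono: "\<forall>x\<ge>0. \<forall>h\<ge>0. f x \<le> f (x + h)" and lip: "\<forall>x\<ge>0. \<forall>h\<ge>0. f (x + h) \<le> f x + K * h"
    and x: "x \<ge> 0" and y: "y \<ge> 0" and ne: "y \<noteq> x"
  shows "0 \<le> (f y - f x) / (y - x) \<and> (f y - f x) / (y - x) \<le> K"
proof (cases "x < y")
  case True
  have "f x \<le> f (x + (y - x))" "f (x + (y - x)) \<le> f x + K * (y - x)"
    using mono[rule_format, of x "y - x"] lip[rule_format, of x "y - x"] x True by auto
  hence a: "0 \<le> f y - f x" "f y - f x \<le> K * (y - x)" by auto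
  show ?thesis using a True by (auto simp: field_simps)
next
  case False
  hence yx: "y < x" using ne by simp
  have "f y \<le> f (y + (x - y))" "f (y + (x - y)) \<le> f y + K * (x - y)"
    using mono[rule_format, of y "x - y"] lip[rule_format, of y "x - y"] y yx by auto
  hence a: "0 \<le> f x - f y" "f x - f y \<le> K * (x - y)" by auto
  have eq: "(f y - f x) / (y - x) = (f x - f y) / (x - y)" by (metis minus_diff_eq minus_divide_divide)
  show ?thesis unfolding eq using a yx by (auto simp: field_simps)
qed

lemma step:
  fixes v v' v'' g :: "real \<Rightarrow> real" and \<mu> \<sigma> r b c A lam :: real
  assumes sig: "\<sigma> > 0" and rp: "r > 0" and b0: "0 \<le> b" and b1: "b \<le> 1" and c0: "0 \<le> c" and cA: "c \<le> r * A"
    and A0: "A \<ge> 0" and lam: "lam \<ge> 1" and lamb: "\<sigma>\<^sup>2 * lam / 2 \<ge> \<bar>\<mu>\<bar> + r"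
    and w: "W2p_loc v v' v''" and bd: "bounded (v ` {0..})" and v0: "v 0 = 0"
    and ae: "AE x in lborel. x > 0 \<longrightarrow> min (- opL \<mu> \<sigma> r (v x) (v' x) (v'' x) - c * opT b (v' x)) (v x - g x) = 0"
    and gc: "continuous_on {0<..} g" and gnn: "\<forall>x\<ge>0. 0 \<le> g x"
    and gmono: "\<forall>x\<ge>0. \<forall>h\<ge>0. g x \<le> g (x + h)"
    and gw: "\<forall>x\<ge>0. g x \<le> A * (1 - exp (- lam * x))"
    and glip: "\<forall>x\<ge>0. \<forall>h\<ge>0. g (x + h) \<le> g x + A * lam * h"
  shows "(\<forall>x\<ge>0. 0 \<le> v x) \<and> (\<forall>x\<ge>0. \<forall>h\<ge>0. v x \<le> v (x + h)) \<and>
         (\<forall>x\<ge>0. v x \<le> A * (1 - exp (- lam * x))) \<and> (\<forall>x\<ge>0. \<forall>h\<ge>0. v (x + h) \<le> v x + A * lam * h)"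
proof -
  have du: "\<forall>x\<ge>0. (v has_real_derivative v' x) (at x within {0..})" using w unfolding W2p_loc_def by auto
  have cu': "continuous_on {0<..} v'" by (rule W2_cont[OF w])
  have ae1: "AE x in lborel. x > 0 \<longrightarrow> 0 \<le> - opL \<mu> \<sigma> r (v x) (v' x) (v'' x) - c * opT b (v' x)"
    using ae by eventually_elim (auto simp: min_def split: if_splits)
  have ae2: "AE x in lborel. x > 0 \<longrightarrow> g x < v x \<longrightarrow> - opL \<mu> \<sigma> r (v x) (v' x) (v'' x) - c * opT b (v' x) \<le> 0"
    using ae by eventually_elim (auto simp: min_def split: if_splits)
  have ae3: "AE x in lborel. x > 0 \<longrightarrow> 0 \<le> v x - g x"
    using ae by eventually_elim (auto simp: min_def split: if_splits)
  have gv: "\<forall>x\<ge>0. g x \<le> v x"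
  proof (intro allI impI)
    fix x :: real assume x: "x \<ge> 0"
    show "g x \<le> v x"
    proof (cases "x = 0")
      case True thus ?thesis using gw v0 by auto
    next
      case False
      have "continuous_on {0<..} (\<lambda>x. v x - g x)"
      proof (intro continuous_intros gc)
        show "continuous_on {0<..} v" by (rule continuous_on_subset[OF W2_contv[OF w]]) auto
      qed
      from AE_cont_nonneg[OF this ae3] False x show ?thesis by simp
    qed
  qed
  have vnn: "\<forall>x\<ge>0. 0 \<le> v x" using gv gnn by (metis order_trans)
  have sub: "\<forall>x y. 0 < x \<longrightarrow> x \<le> y \<longrightarrow> (\<forall>t\<in>{x..y}. g t < v t) \<longrightarrow>
        integral {x..y} (\<lambda>t. (2/\<sigma>\<^sup>2) * (r * v t - \<mu> * v' t - c * opT b (v' t))) \<le> v' y - v' x"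
    by (rule sub_from[OF w sig ae2])
  have superk: "\<forall>x y. 0 < x \<longrightarrow> x \<le> y \<longrightarrow>
        v' y - v' x \<le> integral {x..y} (\<lambda>t. (2/\<sigma>\<^sup>2) * (r * (v t + k) - \<mu> * v' t - c * opT b (v' t)))"
    if "k \<ge> 0" for k
    by (rule super_from[OF w sig _ that ae1]) (use rp in simp)
  have super0: "\<forall>x y. 0 < x \<longrightarrow> x \<le> y \<longrightarrow>
        v' y - v' x \<le> integral {x..y} (\<lambda>t. (2/\<sigma>\<^sup>2) * (r * v t - \<mu> * v' t - c * opT b (v' t)))"
    using superk[of 0] by simp
  have mono: "\<forall>x\<ge>0. \<forall>h\<ge>0. v x \<le> v (x + h)"
  proof (intro allI impI)
    fix x h :: real assume x: "x \<ge> 0" and h: "h \<ge> 0"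
    have "\<forall>x\<ge>0. v (x + 0) \<le> v (x + h)"
    proof (rule comparison[OF sig rp c0 b0 b1 _ h du du cu' cu' bd bd _ _ sub super0])
      show "\<forall>x\<ge>0. g (x + 0) \<le> v (x + h)"
      proof (intro allI impI)
        fix x :: real assume "x \<ge> 0"
        hence "g x \<le> g (x + h)" "g (x + h) \<le> v (x + h)" using gmono gv h by auto
        thus "g (x + 0) \<le> v (x + h)" by simp
      qed
      show "v 0 \<le> v h" using v0 vnn h by simp
    qed simp
    thus "v x \<le> v (x + h)" using x by simp
  qed
  define wf where "wf x = A * (1 - exp (- lam * x))" for x
  define wf' where "wf' x = A * lam * exp (- lam * x)" for x
  have wbound: "\<forall>x\<ge>0. v x \<le> wf x"
  proof -
    have dW: "\<forall>x\<ge>0. (wf has_real_derivative wf' x) (at x within {0..})"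
    proof (intro allI impI)
      fix x :: real
      have "(wf has_real_derivative (A * (0 - exp (- lam * x) * (- lam * 1)))) (at x within {0..})"
        unfolding wf_def by (intro derivative_eq_intros) auto
      thus "(wf has_real_derivative wf' x) (at x within {0..})" unfolding wf'_def by (simp add: algebra_simps)
    qed
    have cW': "continuous_on {0<..} wf'" unfolding wf'_def by (intro continuous_intros)
    have bdW: "bounded (wf ` {0..})"
      unfolding bounded_real
    proof (intro exI ballI)
      fix y assume "y \<in> wf ` {0..}"
      then obtain x where x: "x \<ge> 0" "y = wf x" by auto
      have "exp (- lam * x) \<le> 1" using x lam by simp
      moreover have "exp (- lam * x) > 0" by simp
      ultimately have "0 \<le> 1 - exp (- lam * x)" "1 - exp (- lam * x) \<le> 1" by auto
      hence "0 \<le> A * (1 - exp (- lam * x))" "A * (1 - exp (- lam * x)) \<le> A * 1"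
        using A0 by (simp, intro mult_left_mono, simp_all)
      thus "\<bar>y\<bar> \<le> A" unfolding x wf_def by simp
    qed
    have sW: "\<forall>x y. 0 < x \<longrightarrow> x \<le> y \<longrightarrow> wf' y - wf' x \<le> integral {x..y} (\<lambda>t. (2/\<sigma>\<^sup>2) * (r * wf t - \<mu> * wf' t - c * opT b (wf' t)))"
      using w_super[OF sig rp b0 b1 c0 cA A0 lam lamb] unfolding wf_def wf'_def by simp
    have "\<forall>x\<ge>0. v (x + 0) \<le> wf (x + 0)"
    proof (rule comparison[OF sig rp c0 b0 b1 _ _ du dW cu' cW' bd bdW _ _ sub sW])
      show "\<forall>x\<ge>0. g (x + 0) \<le> wf (x + 0)" using gw unfolding wf_def by simp
      show "v 0 \<le> wf 0" using v0 unfolding wf_def by simp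
    qed simp_all
    thus ?thesis by simp
  qed
  have lip: "\<forall>x\<ge>0. \<forall>h\<ge>0. v (x + h) \<le> v x + A * lam * h"
  proof (intro allI impI)
    fix x h :: real assume x: "x \<ge> 0" and h: "h \<ge> 0"
    define k where "k = A * lam * h"
    have k0: "k \<ge> 0" unfolding k_def using A0 lam h by simp
    have dW: "\<forall>x\<ge>0. ((\<lambda>x. v x + k) has_real_derivative v' x) (at x within {0..})"
    proof (intro allI impI)
      fix x :: real assume "x \<ge> 0"
      hence "(v has_real_derivative v' x) (at x within {0..})" using du by simp
      from DERIV_add[OF this DERIV_const[of k]] show "((\<lambda>x. v x + k) has_real_derivative v' x) (at x within {0..})"
        by simp
    qed
    have bdW: "bounded ((\<lambda>x. v x + k) ` {0..})"
    proof -
      obtain B where B: "\<forall>y\<in>v ` {0..}. \<bar>y\<bar> \<le> B" using bd bounded_real by blast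
      show ?thesis unfolding bounded_real
        by (rule exI[of _ "B + \<bar>k\<bar>"]) (use B in force)
    qed
    have sW: "\<forall>x y. 0 < x \<longrightarrow> x \<le> y \<longrightarrow>
        v' y - v' x \<le> integral {x..y} (\<lambda>t. (2/\<sigma>\<^sup>2) * (r * (\<lambda>x. v x + k) t - \<mu> * v' t - c * opT b (v' t)))"
      using superk[OF k0] by simp
    have "\<forall>x\<ge>0. v (x + h) \<le> (\<lambda>x. v x + k) (x + 0)"
    proof (rule comparison[OF sig rp c0 b0 b1 h _ du dW cu' cu' bd bdW _ _ sub sW])
      show "\<forall>x\<ge>0. g (x + h) \<le> (\<lambda>x. v x + k) (x + 0)"
      proof (intro allI impI)
        fix x :: real assume "x \<ge> 0"
        hence "g (x + h) \<le> g x + k" "g x \<le> v x" using glip gv h unfolding k_def by auto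
        thus "g (x + h) \<le> (\<lambda>x. v x + k) (x + 0)" by simp
      qed
      show "v h \<le> (\<lambda>x. v x + k) 0"
      proof -
        have "v h \<le> A * (1 - exp (- lam * h))" using wbound h unfolding wf_def by simp
        also have "\<dots> \<le> A * (lam * h)"
        proof (rule mult_left_mono[OF _ A0])
          show "1 - exp (- lam * h) \<le> lam * h" using exp_ge_add_one_self[of "- lam * h"] by simp
        qed
        finally show ?thesis unfolding k_def using v0 by (simp add: algebra_simps)
      qed
    qed simp
    thus "v (x + h) \<le> v x + A * lam * h" using x unfolding k_def by simp
  qed
  show ?thesis using vnn mono wbound lip unfolding wf_def by blast
qed


theorem lemma5p8:
  fixes \<mu> \<sigma> r cbar b :: real
  assumes "\<sigma> > 0" and "r > 0" and "0 < cbar" and "cbar \<le> \<mu>" and "0 \<le> b" and "b \<le> 1"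
    and "2 * \<mu> * cbar > \<sigma>\<^sup>2 * r"
  shows "\<exists>K>0. \<forall>n::nat. \<forall>v v' v''. n \<ge> 1 \<longrightarrow> regime_solution \<mu> \<sigma> r cbar b n v v' v'' \<longrightarrow>
           (\<forall>i\<le>n. \<forall>x\<ge>0. 0 \<le> v' i x \<and> v' i x \<le> K)"
proof -
  note sig = assms(1) and rp = assms(2) and cb = assms(3) and b0 = assms(5) and b1 = assms(6)
  define lam where "lam = max 1 (2 * (\<bar>\<mu>\<bar> + r) / \<sigma>\<^sup>2)"
  define A where "A = cbar / r"
  have lam: "lam \<ge> 1" unfolding lam_def by simp
  have lamb: "\<sigma>\<^sup>2 * lam / 2 \<ge> \<bar>\<mu>\<bar> + r"
  proof -
    have s2: "\<sigma>\<^sup>2 > 0" using sig by simp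
    have "2 * (\<bar>\<mu>\<bar> + r) / \<sigma>\<^sup>2 \<le> lam" unfolding lam_def by simp
    hence "\<sigma>\<^sup>2 * (2 * (\<bar>\<mu>\<bar> + r) / \<sigma>\<^sup>2) \<le> \<sigma>\<^sup>2 * lam" using s2 by (intro mult_left_mono) auto
    thus ?thesis using s2 by simp
  qed
  have A0: "A \<ge> 0" unfolding A_def using cb rp by simp
  have rA: "r * A = cbar" unfolding A_def using rp by simp
  show ?thesis
  proof (rule exI[of _ "A * lam"], rule conjI)
    show "A * lam > 0" unfolding A_def using cb rp lam by simp
  next
    show "\<forall>n::nat. \<forall>v v' v''. n \<ge> 1 \<longrightarrow> regime_solution \<mu> \<sigma> r cbar b n v v' v'' \<longrightarrow>
           (\<forall>i\<le>n. \<forall>x\<ge>0. 0 \<le> v' i x \<and> v' i x \<le> A * lam)"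
    proof (intro allI impI)
    fix n :: nat and v v' v'' :: "nat \<Rightarrow> real \<Rightarrow> real" and i :: nat and x :: real
    assume n: "n \<ge> 1" and rs: "regime_solution \<mu> \<sigma> r cbar b n v v' v''" and i: "i \<le> n" and x: "x \<ge> 0"
    have data: "bounded (v j ` {0..}) \<and> W2p_loc (v j) (v' j) (v'' j) \<and> v j 0 = 0 \<and>
        (AE x in lborel. x > 0 \<longrightarrow>
           min (- opL \<mu> \<sigma> r (v j x) (v' j x) (v'' j x) - cc cbar n j * opT b (v' j x))
               (v j x - (if j = 0 then 0 else v (j - 1) x)) = 0)" if "j \<le> n" for j
      using rs that unfolding regime_solution_def by blast
    have cc: "0 \<le> cc cbar n j \<and> cc cbar n j \<le> r * A" if "j \<le> n" for j
    proof -
      have "real j * (cbar / real n) \<le> real n * (cbar / real n)"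
        using that cb by (intro mult_right_mono) auto
      also have "\<dots> = cbar" using n by simp
      finally have "real j * (cbar / real n) \<le> cbar" .
      moreover have "0 \<le> real j * (cbar / real n)" using cb by simp
      ultimately show ?thesis unfolding cc_def rA by simp
    qed
    define Q where "Q f \<longleftrightarrow> (\<forall>x\<ge>0. 0 \<le> f x) \<and> (\<forall>x\<ge>0. \<forall>h\<ge>0. f x \<le> f (x + h)) \<and>
         (\<forall>x\<ge>0. f x \<le> A * (1 - exp (- lam * x))) \<and> (\<forall>x\<ge>0. \<forall>h\<ge>0. f (x + h) \<le> f x + A * lam * h)"
      for f :: "real \<Rightarrow> real"
    have stp: "Q (v j)" if j: "j \<le> n" and gc: "continuous_on {0<..} (\<lambda>x. if j = 0 then 0 else v (j - 1) x)"
      and gQ: "Q (\<lambda>x. if j = 0 then 0 else v (j - 1) x)" for j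
    proof -
      note d = data[OF j]
      show ?thesis unfolding Q_def
      proof (rule step[OF sig rp b0 b1 _ _ A0 lam lamb _ _ _ _ gc])
        show "0 \<le> cc cbar n j" "cc cbar n j \<le> r * A" using cc[OF j] by auto
      qed (use d gQ in \<open>auto simp: Q_def\<close>)
    qed
    have allQ: "Q (v j)" if "j \<le> n" for j
      using that
    proof (induct j)
      case 0
      show ?case
      proof (rule stp[OF 0])
        show "continuous_on {0<..} (\<lambda>x. if (0::nat) = 0 then 0 else v (0 - 1) x)" by simp
        have "A * (1 - exp (- lam * x)) \<ge> 0" if "x \<ge> 0" for x
          using A0 that lam by (intro mult_nonneg_nonneg) auto
        thus "Q (\<lambda>x. if (0::nat) = 0 then 0 else v (0 - 1) x)" unfolding Q_def using A0 lam by auto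
      qed
    next
      case (Suc j)
      have Qj: "Q (v j)" using Suc by simp
      show ?case
      proof (rule stp[OF Suc.prems])
        have "continuous_on {0..} (v j)" using data[of j] Suc.prems W2_contv by auto
        hence "continuous_on {0<..} (v j)" by (rule continuous_on_subset) auto
        thus "continuous_on {0<..} (\<lambda>x. if Suc j = 0 then 0 else v (Suc j - 1) x)" by simp
        show "Q (\<lambda>x. if Suc j = 0 then 0 else v (Suc j - 1) x)" using Qj by simp
      qed
    qed
    have Qi: "Q (v i)" by (rule allQ[OF i])
    have dv: "(v i has_real_derivative v' i x) (at x within {0..})"
      using data[OF i] x unfolding W2p_loc_def by auto
    show "0 \<le> v' i x \<and> v' i x \<le> A * lam"
    proof (rule deriv_bounds[OF dv x])
      fix y :: real assume "y \<ge> 0" "y \<noteq> x"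
      thus "0 \<le> (v i y - v i x) / (y - x) \<and> (v i y - v i x) / (y - x) \<le> A * lam"
        using quot_bounds[of "v i" "A * lam" x y] Qi x unfolding Q_def by blast
    qed
    qed
  qed
qed

end
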